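(* Let $A,B,C,D\in\mathsf{W}_\omega$ be such that $|A|=|B|$ and, for every position $i$, the $i$-th symbol of $A$ is $\le$ the $i$-th symbol of $B$. Then $A\precsim DBC$. Moreover, if either $C\neq\Lambda$ or the last symbols of $A$ and $B$ are different, then $A\prec DBC$.
   Context: Words are finite strings over $\mathbb{N}$; $\mathsf{W}_\omega$ is the set of all words, $\Lambda$ the empty word, juxtaposition denotes concatenation, $|A|$ is length. For $k\in\mathbb{N}$, $\mathsf{S}_k$ is the set of words all of whose symbols are $\ge k$. Given a linear preorder $\precsim$ with $A\sim B$ iff $A\precsim B\wedge B\precsim A$ and $A\prec B$ iff $A\precsim B\wedge\neg B\precsim A$, a finite sequence $(A_1,\dots,A_p)$ is lexicographically not greater than $(B_1,\dots,B_q)$ iff either $p\le q$ and $A_i\sim B_i$ for all $i\le p$, or there is $s<\min(p,q)$ with $A_i\sim B_i$ for $i\le s$ and $A_{s+1}\prec B_{s+1}$. A lexicographically maximal subsequence of a finite sequence is a subsequence that is lexicographically not less than every subsequence. The linear preorder $\precsim$ on $\mathsf{W}_\omega$ is defined by recursion on (largest symbol of $AB$) $-$ (smallest symbol of $AB$): $\Lambda\precsim\Lambda$; if $AB$ is nonempty with minimal symbol $n$, write uniquely $A=A_1n\cdots nA_k$, $B=B_1n\cdots nB_l$ ($k,l\ge1$) with $A_i,B_j\in\mathsf{S}_{n+1}$ (possibly empty); let $C,D$ be lexicographically maximal subsequences of $(A_1,\dots,A_k)$, $(B_1,\dots,B_l)$; then $A\precsim B$ iff $C$ is lexicographically not greater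 than $D$. *)

theory Defs
  imports Main
begin

(* Words are lists of naturals; [] is the empty word Lambda. *)

fun wsplit :: "nat \<Rightarrow> nat list \<Rightarrow> nat list list" where
  "wsplit n [] = [[]]"
| "wsplit n (x # xs) =
     (if x = n then [] # wsplit n xs
      else (let r = wsplit n xs in (x # hd r) # tl r))"

definition lexle :: "('a \<Rightarrow> 'a \<Rightarrow> bool) \<Rightarrow> 'a list \<Rightarrow> 'a list \<Rightarrow> bool" where
  "lexle r X Y \<longleftrightarrow>
     (length X \<le> length Y \<and> (\<forall>i<length X. r (X!i) (Y!i) \<and> r (Y!i) (X!i)))
   \<or> (\<exists>s < min (length X) (length Y).
        (\<forall>i<s. r (X!i) (Y!i) \<and> r (Y!i) (X!i)) \<and> r (X!s) (Y!s) \<and> \<not> r (Y!s) (X!s))"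

definition lexmax :: "('a \<Rightarrow> 'a \<Rightarrow> bool) \<Rightarrow> 'a list \<Rightarrow> 'a list \<Rightarrow> bool" where
  "lexmax r Xs C \<longleftrightarrow> C \<in> set (subseqs Xs) \<and> (\<forall>S \<in> set (subseqs Xs). lexle r S C)"

(* fuel-bounded version of the recursion; fuel only needs to exceed the spread *)
fun wle_f :: "nat \<Rightarrow> nat list \<Rightarrow> nat list \<Rightarrow> bool" where
  "wle_f 0 A B = True"
| "wle_f (Suc k) A B =
     (if A @ B = [] then True
      else (let n = Min (set (A @ B)) in
            \<exists>C D. lexmax (wle_f k) (wsplit n A) C \<and> lexmax (wle_f k) (wsplit n B) D
                  \<and> lexle (wle_f k) C D))"

(* A \<precsim> B : recursion on (largest symbol of AB) - (smallest symbol of AB) *)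
definition wle :: "nat list \<Rightarrow> nat list \<Rightarrow> bool" where
  "wle A B = wle_f (Suc (Max (set (A @ B)) - Min (set (A @ B)))) A B"

definition wless :: "nat list \<Rightarrow> nat list \<Rightarrow> bool" where
  "wless A B \<longleftrightarrow> wle A B \<and> \<not> wle B A"

end

theory Submission
  imports Defs "HOL-Library.List_Lexorder"
begin


datatype tree = Node "tree list"

function tle :: "tree \<Rightarrow> tree \<Rightarrow> bool" and lle :: "tree list \<Rightarrow> tree list \<Rightarrow> bool" where
  "tle (Node xs) (Node ys) = lle xs ys"
| "lle [] ys = True"
| "lle (x#xs) [] = False"
| "lle (x#xs) (y#ys) = ((tle x y \<and> \<not> tle y x) \<or> (tle x y \<and> tle y x \<and> lle xs ys))"
  by pat_completeness auto
termination
  by (relation "measure (case_sum (\<lambda>(x,y). size x + size y) (\<lambda>(xs,ys). size_list size xs + size_list size ys))") auto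

lemma tle_refl: "tle x x"
proof (induction x)
  case (Node xs)
  then show ?case by (induction xs) auto
qed

lemma tle_total: "tle x y \<or> tle y x"
proof (induction x arbitrary: y)
  case (Node xs)
  obtain ys where y: "y = Node ys" by (cases y)
  have "lle xs ys \<or> lle ys xs" using Node
  proof (induction xs arbitrary: ys)
    case Nil then show ?case by simp
  next
    case (Cons a xs) then show ?case by (cases ys) auto
  qed
  then show ?case using y by simp
qed

lemma tle_antisym: "tle x y \<Longrightarrow> tle y x \<Longrightarrow> x = y"
proof (induction x arbitrary: y)
  case (Node xs)
  obtain ys where y: "y = Node ys" by (cases y)
  have "lle xs ys \<Longrightarrow> lle ys xs \<Longrightarrow> xs = ys" using Node.IH
  proof (induction xs arbitrary: ys)
    case Nil then show ?case by (cases ys) auto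
  next
    case (Cons a xs) then show ?case by (cases ys) auto
  qed
  then show ?case using y Node.prems by simp
qed

lemma lle_Cons: "lle (x#xs) (y#ys) = ((tle x y \<and> x \<noteq> y) \<or> (x = y \<and> lle xs ys))"
  using tle_antisym tle_refl by auto

lemma tle_trans: "tle x y \<Longrightarrow> tle y z \<Longrightarrow> tle x z"
proof (induction x arbitrary: y z)
  case (Node xs)
  obtain ys where y: "y = Node ys" by (cases y)
  obtain zs where z: "z = Node zs" by (cases z)
  have "lle xs ys \<Longrightarrow> lle ys zs \<Longrightarrow> lle xs zs" using Node.IH
  proof (induction xs arbitrary: ys zs)
    case Nil then show ?case by simp
  next
    case (Cons a xs)
    obtain b ys' where ys: "ys = b # ys'" using Cons.prems(1) by (cases ys) simp_all
    obtain c zs' where zs: "zs = c # zs'" using Cons.prems(2) ys by (cases zs) simp_all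
    have tr: "tle a b \<Longrightarrow> tle b c \<Longrightarrow> tle a c" using Cons.prems(3) by (meson list.set_intros(1))
    have ih3: "\<And>u v w. u \<in> set xs \<Longrightarrow> tle u v \<Longrightarrow> tle v w \<Longrightarrow> tle u w"
      using Cons.prems(3) by (meson list.set_intros(2))
    have ih: "lle xs ys' \<Longrightarrow> lle ys' zs' \<Longrightarrow> lle xs zs'"
      using Cons.IH[of ys' zs'] ih3 by blast
    have h1: "(tle a b \<and> a \<noteq> b) \<or> (a = b \<and> lle xs ys')" using Cons.prems(1) ys lle_Cons by simp
    have h2: "(tle b c \<and> b \<noteq> c) \<or> (b = c \<and> lle ys' zs')" using Cons.prems(2) ys zs lle_Cons by simp
    have "(tle a c \<and> a \<noteq> c) \<or> (a = c \<and> lle xs zs')"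
      using h1 h2 tr ih tle_antisym[of a b] by blast
    then show ?case using zs lle_Cons by simp
  qed
  then show ?case using y z Node.prems by simp
qed

instantiation tree :: linorder
begin
definition "less_eq_tree x y = tle x y"
definition "less_tree x y = (tle x y \<and> \<not> tle y x)"
instance
  proof
  fix x y z :: tree
  show "(x < y) = (x \<le> y \<and> \<not> y \<le> x)" by (simp add: less_eq_tree_def less_tree_def)
  show "x \<le> x" by (simp add: less_eq_tree_def tle_refl)
  show "x \<le> y \<Longrightarrow> y \<le> z \<Longrightarrow> x \<le> z" unfolding less_eq_tree_def by (rule tle_trans)
  show "x \<le> y \<Longrightarrow> y \<le> x \<Longrightarrow> x = y" unfolding less_eq_tree_def by (rule tle_antisym)
  show "x \<le> y \<or> y \<le> x" unfolding less_eq_tree_def by (rule tle_total)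
qed
end

lemma Node_le: "(Node xs \<le> Node ys) = (xs \<le> ys)"
proof -
  have "lle xs ys = (xs \<le> ys)"
  proof (induction xs arbitrary: ys)
    case Nil then show ?case by simp
  next
    case (Cons a xs)
    show ?case
    proof (cases ys)
      case Nil then show ?thesis by simp
    next
      case (Cons b ys')
      have e: "(tle a b \<and> a \<noteq> b) = (a < b)"
        by (metis less_eq_tree_def order.strict_iff_order)
      show ?thesis unfolding Cons lle_Cons e using Cons.IH[of ys'] by simp
    qed
  qed
  then show ?thesis by (simp add: less_eq_tree_def)
qed

lemma Node_less: "(Node xs < Node ys) = (xs < ys)"
  by (simp add: less_le_not_le Node_le)



fun sufmax :: "'a::linorder list \<Rightarrow> 'a list" where
  "sufmax [] = []"
| "sufmax (x # xs) = (if (\<forall>y\<in>set xs. y \<le> x) then x # sufmax xs else sufmax xs)"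

lemma sufmax_set: "set (sufmax xs) \<subseteq> set xs"
  by (induction xs) auto

lemma sufmax_ne: "xs \<noteq> [] \<Longrightarrow> sufmax xs \<noteq> []"
proof (induction xs)
  case (Cons x xs) then show ?case by (cases "xs = []") auto
qed simp

lemma sufmax_hd: "xs \<noteq> [] \<Longrightarrow> \<forall>y\<in>set xs. y \<le> hd (sufmax xs)"
proof (induction xs)
  case Nil then show ?case by simp
next
  case (Cons x xs)
  show ?case
  proof (cases "\<forall>y\<in>set xs. y \<le> x")
    case True then show ?thesis by simp
  next
    case False
    then obtain z where z: "z \<in> set xs" "\<not> z \<le> x" by auto
    then have "xs \<noteq> []" by auto
    with Cons.IH have "\<forall>y\<in>set xs. y \<le> hd (sufmax xs)" by simp
    with z False show ?thesis by auto
  qed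
qed

lemma sufmax_hd_in: "xs \<noteq> [] \<Longrightarrow> hd (sufmax xs) \<in> set xs"
  using sufmax_set sufmax_ne hd_in_set by blast

lemma sufmax_app: "sufmax (xs @ ys) = takeWhile (\<lambda>x. \<forall>y\<in>set ys. y \<le> x) (sufmax xs) @ sufmax ys"
proof (induction xs)
  case Nil then show ?case by simp
next
  case (Cons x xs)
  show ?case
  proof (cases "\<forall>y\<in>set (xs @ ys). y \<le> x")
    case True then show ?thesis using Cons by auto
  next
    case False
    show ?thesis
    proof (cases "\<forall>y\<in>set xs. y \<le> x")
      case True
      with False obtain y where y: "y \<in> set ys" "\<not> y \<le> x" by auto
      have "takeWhile (\<lambda>x. \<forall>y\<in>set ys. y \<le> x) (sufmax xs) = []"
      proof (cases "sufmax xs")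
        case (Cons h t)
        then have "h \<in> set xs" using sufmax_set by force
        then have "h \<le> x" using True by auto
        then have "\<not> y \<le> h" using y by auto
        then show ?thesis using Cons y by auto
      qed simp
      then show ?thesis using Cons True False y by auto
    next
      case False2: False
      then show ?thesis using Cons False by auto
    qed
  qed
qed

lemma le_Cons_self: "\<forall>a\<in>set w. a \<le> m \<Longrightarrow> w \<le> m # (w::'a::linorder list)"
proof (induction w)
  case Nil then show ?case by simp
next
  case (Cons a w)
  show ?case
  proof (cases "a = m")
    case True then show ?thesis using Cons by simp
  next
    case False then have "a < m" using Cons.prems by auto
    then show ?thesis by simp
  qed
qed

lemma le_app_self: "\<forall>a\<in>set w. a \<le> m \<Longrightarrow> \<forall>x\<in>set r. m \<le> x \<Longrightarrow> m # w \<le> r @ m # (w::'a::linorder list)"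
proof (induction r)
  case Nil then show ?case by simp
next
  case (Cons x r)
  show ?case
  proof (cases "x = m")
    case True
    have "w \<le> m # w" using le_Cons_self Cons.prems by blast
    also have "\<dots> \<le> r @ m # w" using Cons by simp
    finally show ?thesis using True by simp
  next
    case False then show ?thesis using Cons.prems by (auto simp: less_le)
  qed
qed

lemma sufmax_le_app: "ys \<noteq> [] \<Longrightarrow> \<forall>x\<in>set r. \<forall>y\<in>set ys. y \<le> x \<Longrightarrow> sufmax ys \<le> r @ sufmax ys"
proof -
  assume ne: "ys \<noteq> []" and r: "\<forall>x\<in>set r. \<forall>y\<in>set ys. y \<le> x"
  obtain m w where mw: "sufmax ys = m # w" using sufmax_ne[OF ne] by (cases "sufmax ys") auto
  have m: "m \<in> set ys" using sufmax_hd_in[OF ne] mw by simp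
  have "\<forall>a\<in>set w. a \<le> m" using sufmax_hd[OF ne] sufmax_set[of ys] mw by auto
  moreover have "\<forall>x\<in>set r. m \<le> x" using r m by auto
  ultimately show ?thesis using le_app_self mw by metis
qed

lemma tw_mono:
  assumes mono: "\<And>a b. P a \<Longrightarrow> a \<le> b \<Longrightarrow> P b"
    and hq: "\<And>r. \<forall>x\<in>set r. P x \<Longrightarrow> w \<le> r @ w"
  shows "u \<le> u' \<Longrightarrow> takeWhile P u @ w \<le> takeWhile P u' @ (w::'a::linorder list)"
proof (induction u arbitrary: u')
  case Nil
  have "\<forall>x\<in>set (takeWhile P u'). P x" by (auto dest: set_takeWhileD)
  then show ?case using hq by simp
next
  case (Cons a s)
  then obtain b s' where u': "u' = b # s'" by (cases u') auto
  show ?case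
  proof (cases "a < b")
    case True
    show ?thesis
    proof (cases "P a")
      case True
      then have "P b" using mono[of a b] \<open>a < b\<close> by (meson less_imp_le)
      then show ?thesis using True \<open>a < b\<close> u' by simp
    next
      case False
      have "\<forall>x\<in>set (takeWhile P u'). P x" by (auto dest: set_takeWhileD)
      then show ?thesis using hq False by simp
    qed
  next
    case False
    then have "a = b" "s \<le> s'" using Cons.prems u' by auto
    then show ?thesis using Cons.IH u' by auto
  qed
qed

lemma sufmax_mono_left: "sufmax xs \<le> sufmax xs' \<Longrightarrow> sufmax (xs @ ys) \<le> sufmax (xs' @ ys)"
proof -
  assume h: "sufmax xs \<le> sufmax xs'"
  let ?P = "\<lambda>x. \<forall>y\<in>set ys. y \<le> x"
  have hq: "\<And>r. \<forall>x\<in>set r. ?P x \<Longrightarrow> sufmax ys \<le> r @ sufmax ys"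
    using sufmax_le_app by (cases "ys = []") auto
  show ?thesis unfolding sufmax_app
    by (rule tw_mono[OF _ hq h]) auto
qed

lemma app_le_app: "(p @ a \<le> p @ b) = (a \<le> (b::'a::linorder list))"
  by (induction p) auto
lemma app_less_app: "(p @ a < p @ b) = (a < (b::'a::linorder list))"
  by (induction p) auto

lemma tw_split: "(\<And>x. P' x \<Longrightarrow> P x) \<Longrightarrow> takeWhile P u = takeWhile P' u @ takeWhile P (dropWhile P' u)"
  by (induction u) auto

lemma imp_lemma:
  assumes h: "sufmax ys \<le> sufmax ys'" and px: "\<forall>y\<in>set ys'. y \<le> x"
  shows "\<forall>y\<in>set ys. y \<le> x"
proof (cases "ys = []")
  case True then show ?thesis by simp
next
  case False
  obtain a t where a: "sufmax ys = a # t" using sufmax_ne[OF False] by (meson list.exhaust)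
  have ne': "ys' \<noteq> []"
  proof
    assume "ys' = []"
    then have "sufmax ys' = []" by simp
    then show False using h a by simp
  qed
  obtain b t' where b: "sufmax ys' = b # t'" using sufmax_ne[OF ne'] by (meson list.exhaust)
  have "a # t \<le> b # t'" using h a b by simp
  then have "a \<le> b" unfolding Cons_le_Cons by (metis less_imp_le order_refl)
  have "b \<in> set ys'" using sufmax_hd_in[OF ne'] b by simp
  then have bx: "b \<le> x" using px by blast
  have ax: "a \<le> x" using \<open>a \<le> b\<close> bx by (rule order.trans)
  have "a = hd (sufmax ys)" using a by simp
  then have ya: "\<forall>y\<in>set ys. y \<le> a" using sufmax_hd[OF False] by simp
  show ?thesis
  proof
    fix y assume "y \<in> set ys"
    then have "y \<le> a" using ya by blast
    then show "y \<le> x" using ax by (rule order.trans)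
  qed
qed

lemma sufmax_mono_right:
  assumes h: "sufmax ys \<le> sufmax ys'"
  shows "sufmax (xs @ ys) \<le> sufmax (xs @ ys')"
    and "sufmax ys < sufmax ys' \<Longrightarrow> sufmax (xs @ ys) < sufmax (xs @ ys')"
proof -
  let ?P = "\<lambda>x. \<forall>y\<in>set ys. y \<le> x"
  let ?P' = "\<lambda>x. \<forall>y\<in>set ys'. y \<le> x"
  let ?u = "sufmax xs"
  have split: "takeWhile ?P ?u = takeWhile ?P' ?u @ takeWhile ?P (dropWhile ?P' ?u)"
    by (rule tw_split, rule imp_lemma[OF h])
  define e where "e = takeWhile ?P (dropWhile ?P' ?u)"
  have key: "e @ sufmax ys \<le> sufmax ys' \<and> (sufmax ys < sufmax ys' \<longrightarrow> e @ sufmax ys < sufmax ys')"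
  proof (cases e)
    case Nil then show ?thesis using h by simp
  next
    case (Cons x e')
    have "dropWhile ?P' ?u \<noteq> []"
    proof
      assume "dropWhile ?P' ?u = []"
      then show False using Cons unfolding e_def by (metis list.distinct(1) takeWhile.simps(1))
    qed
    then obtain x0 d where d: "dropWhile ?P' ?u = x0 # d" by (cases "dropWhile ?P' ?u") blast+
    have "?u = takeWhile ?P' ?u @ x0 # d \<and> \<not> ?P' x0" by (rule iffD1[OF dropWhile_eq_Cons_conv d])
    then have nP: "\<not> ?P' x0" by (rule conjunct2)
    have "e \<noteq> []" using Cons by simp
    then have "?P x0" unfolding e_def d by (metis takeWhile.simps(2))
    then have ex: "e = x0 # takeWhile ?P d" unfolding e_def d by simp
    from nP obtain y where y: "y \<in> set ys'" "x0 < y" by (meson not_le)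
    then have ne': "ys' \<noteq> []" by (metis empty_iff list.set(1))
    obtain b t' where b: "sufmax ys' = b # t'" using sufmax_ne[OF ne'] by (meson list.exhaust)
    have "y \<le> hd (sufmax ys')" using sufmax_hd[OF ne'] y(1) by blast
    then have "y \<le> b" using b by simp
    then have "x0 < b" using y(2) by (rule order.strict_trans2[rotated])
    then have "e @ sufmax ys < sufmax ys'" unfolding ex b by simp
    then show ?thesis by (simp add: less_imp_le)
  qed
  have eq1: "sufmax (xs @ ys) = takeWhile ?P' ?u @ (e @ sufmax ys)"
    unfolding sufmax_app e_def by (simp only: split append_assoc)
  have eq2: "sufmax (xs @ ys') = takeWhile ?P' ?u @ sufmax ys'"
    unfolding sufmax_app by simp
  show "sufmax (xs @ ys) \<le> sufmax (xs @ ys')"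
    unfolding eq1 eq2 app_le_app using key by simp
  show "sufmax ys < sufmax ys' \<Longrightarrow> sufmax (xs @ ys) < sufmax (xs @ ys')"
    unfolding eq1 eq2 app_less_app using key by simp
qed

lemma sufmax_ge_single:
  shows "[y] \<le> sufmax (ds @ y # cs)" and "cs \<noteq> [] \<Longrightarrow> [y] < sufmax (ds @ y # cs)"
proof -
  have A: "sufmax (y # cs) \<le> sufmax (ds @ y # cs)"
    unfolding sufmax_app[of ds]
    by (rule sufmax_le_app) (auto dest: set_takeWhileD)
  have B: "[y] \<le> sufmax (y # cs) \<and> (cs \<noteq> [] \<longrightarrow> [y] < sufmax (y # cs))"
  proof (cases "\<forall>z\<in>set cs. z \<le> y")
    case True
    then show ?thesis using sufmax_ne[of cs] by (cases "sufmax cs") auto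
  next
    case False
    then obtain z where z: "z \<in> set cs" "y < z" by (auto simp: not_le)
    then have ne: "cs \<noteq> []" by auto
    obtain b t where b: "sufmax cs = b # t" using sufmax_ne[OF ne] by (cases "sufmax cs") auto
    have "z \<le> b" using sufmax_hd[OF ne] z b by auto
    then show ?thesis using False b z by auto
  qed
  show "[y] \<le> sufmax (ds @ y # cs)" using A B by auto
  show "cs \<noteq> [] \<Longrightarrow> [y] < sufmax (ds @ y # cs)" using A B by auto
qed

lemma sufmax_snoc_le:
  assumes h: "sufmax xs < [y]" and t: "t \<le> y"
  shows "sufmax (xs @ [t]) \<le> [y]" and "t < y \<Longrightarrow> sufmax (xs @ [t]) < [y]"
proof -
  have "sufmax (xs @ [t]) \<le> [y] \<and> (t < y \<longrightarrow> sufmax (xs @ [t]) < [y])"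
  proof (cases "xs = []")
    case True then show ?thesis using t by auto
  next
    case False
    obtain hh tt where ht: "sufmax xs = hh # tt" using sufmax_ne[OF False] by (cases "sufmax xs") auto
    have "hh < y" using h ht by auto
    show ?thesis
    proof (cases "t \<le> hh")
      case True
      then show ?thesis unfolding sufmax_app using ht \<open>hh < y\<close> by auto
    next
      case False
      then show ?thesis unfolding sufmax_app using ht t by auto
    qed
  qed
  then show "sufmax (xs @ [t]) \<le> [y]" "t < y \<Longrightarrow> sufmax (xs @ [t]) < [y]" by auto
qed



lemma lexle_Nil: "lexle r [] Y"
  by (simp add: lexle_def)

lemma lexle_Cons_Nil: "\<not> lexle r (x#X) []"
  by (simp add: lexle_def)

lemma lexle_Cons: "lexle r (x#X) (y#Y) =
   ((r x y \<and> \<not> r y x) \<or> (r x y \<and> r y x \<and> lexle r X Y))"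
proof -
  have "lexle r (x#X) (y#Y) =
     ((length X \<le> length Y \<and> (r x y \<and> r y x) \<and> (\<forall>i<length X. r (X!i) (Y!i) \<and> r (Y!i) (X!i)))
   \<or> ((r x y \<and> \<not> r y x) \<or> ((r x y \<and> r y x) \<and> (\<exists>s < min (length X) (length Y).
        (\<forall>i<s. r (X!i) (Y!i) \<and> r (Y!i) (X!i)) \<and> r (X!s) (Y!s) \<and> \<not> r (Y!s) (X!s)))))"
    unfolding lexle_def
    by (simp add: All_less_Suc2 Ex_less_Suc2) blast
  then show ?thesis unfolding lexle_def by auto
qed

lemma lexle_pull:
  assumes "\<forall>P\<in>S. \<forall>Q\<in>S. r P Q = (f P \<le> (f Q :: 'b::linorder))"
  shows "set X \<subseteq> S \<Longrightarrow> set Y \<subseteq> S \<Longrightarrow> lexle r X Y = (map f X \<le> map f Y)"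
proof (induction X arbitrary: Y)
  case Nil then show ?case by (simp add: lexle_Nil)
next
  case (Cons x X)
  then show ?case
  proof (cases Y)
    case Nil then show ?thesis by (simp add: lexle_Cons_Nil)
  next
    case (Cons y Y')
    have rx: "r x y = (f x \<le> f y)" "r y x = (f y \<le> f x)" using assms Cons.prems Cons by auto
    have ih: "lexle r X Y' = (map f X \<le> map f Y')" using Cons.IH[of Y'] Cons.prems Cons by auto
    show ?thesis unfolding Cons lexle_Cons rx ih by (auto simp: less_le_not_le)
  qed
qed

lemma subseqs_map: "subseqs (map f xs) = map (map f) (subseqs xs)"
  by (induction xs) (auto simp: Let_def)

lemma subseqs_set: "S \<in> set (subseqs xs) \<Longrightarrow> set S \<subseteq> set xs"
proof -
  assume "S \<in> set (subseqs xs)"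
  then have "set S \<in> set ` set (subseqs xs)" by (rule imageI)
  then show ?thesis unfolding subseqs_powset by simp
qed

lemma sufmax_in_subseqs: "sufmax xs \<in> set (subseqs xs)"
  by (induction xs) (auto simp: Let_def)

lemma subseq_le_sufmax: "S \<in> set (subseqs xs) \<Longrightarrow> S \<le> sufmax xs"
proof (induction xs arbitrary: S)
  case Nil then show ?case by simp
next
  case (Cons x xs)
  from Cons.prems have S: "(\<exists>S'. S = x # S' \<and> S' \<in> set (subseqs xs)) \<or> S \<in> set (subseqs xs)"
    by (auto simp: Let_def)
  show ?case
  proof (cases "\<forall>y\<in>set xs. y \<le> x")
    case True
    have s: "sufmax (x # xs) = x # sufmax xs" using True by simp
    show ?thesis using S
    proof
      assume "\<exists>S'. S = x # S' \<and> S' \<in> set (subseqs xs)"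
      then obtain S' where S': "S = x # S'" "S' \<in> set (subseqs xs)" by blast
      have "S' \<le> sufmax xs" using Cons.IH S'(2) by simp
      then show ?thesis using s S'(1) by simp
    next
      assume h: "S \<in> set (subseqs xs)"
      have "S \<le> sufmax xs" using Cons.IH h by simp
      also have "\<dots> \<le> x # sufmax xs"
        using le_Cons_self[of "sufmax xs" x] True sufmax_set[of xs] by blast
      finally show ?thesis using s by simp
    qed
  next
    case False
    then have ne: "xs \<noteq> []" by auto
    obtain z where z: "z \<in> set xs" "x < z" using False by (auto simp: not_le)
    obtain b t where b: "sufmax xs = b # t" using sufmax_ne[OF ne] by (cases "sufmax xs") auto
    have "x < b" using sufmax_hd[OF ne] z b by fastforce
    show ?thesis using S
    proof
      assume "\<exists>S'. S = x # S' \<and> S' \<in> set (subseqs xs)"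
      then obtain S' where S': "S = x # S'" by blast
      have "sufmax (x#xs) = b # t" using False b by simp
      then show ?thesis using S' \<open>x < b\<close> by simp
    next
      assume h: "S \<in> set (subseqs xs)"
      have "sufmax (x#xs) = sufmax xs" using False by simp
      then show ?thesis using Cons.IH h by simp
    qed
  qed
qed

lemma lexmax_pull:
  assumes ag: "\<forall>P\<in>S. \<forall>Q\<in>S. r P Q = (f P \<le> (f Q :: 'b::linorder))"
    and XS: "set Xs \<subseteq> S"
  shows "lexmax r Xs C = (C \<in> set (subseqs Xs) \<and> map f C = sufmax (map f Xs))"
proof -
  have sub: "\<And>T. T \<in> set (subseqs Xs) \<Longrightarrow> set T \<subseteq> S" using subseqs_set XS by blast
  obtain S0 where S0: "S0 \<in> set (subseqs Xs)" "map f S0 = sufmax (map f Xs)"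
    using sufmax_in_subseqs[of "map f Xs"] unfolding subseqs_map by auto
  show ?thesis
  proof
    assume h: "lexmax r Xs C"
    then have C: "C \<in> set (subseqs Xs)" "\<forall>T\<in>set (subseqs Xs). lexle r T C"
      unfolding lexmax_def by auto
    have "map f C \<le> sufmax (map f Xs)"
      using subseq_le_sufmax[of "map f C" "map f Xs"] C(1) unfolding subseqs_map by auto
    moreover have "map f S0 \<le> map f C"
      using C(2) S0(1) lexle_pull[OF ag] sub[OF C(1)] sub[OF S0(1)] by blast
    ultimately show "C \<in> set (subseqs Xs) \<and> map f C = sufmax (map f Xs)"
      using S0 C by auto
  next
    assume h: "C \<in> set (subseqs Xs) \<and> map f C = sufmax (map f Xs)"
    have "\<forall>T\<in>set (subseqs Xs). lexle r T C"
    proof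
      fix T assume T: "T \<in> set (subseqs Xs)"
      have "map f T \<le> sufmax (map f Xs)"
        using subseq_le_sufmax[of "map f T" "map f Xs"] T unfolding subseqs_map by auto
      then show "lexle r T C" using lexle_pull[OF ag] sub[OF T] sub[of C] h by auto
    qed
    then show "lexmax r Xs C" using h unfolding lexmax_def by auto
  qed
qed

lemma ex_lexmax:
  assumes ag: "\<forall>P\<in>S. \<forall>Q\<in>S. r P Q = (f P \<le> (f Q :: 'b::linorder))"
    and XS: "set Xs \<subseteq> S" and YS: "set Ys \<subseteq> S"
  shows "(\<exists>C D. lexmax r Xs C \<and> lexmax r Ys D \<and> lexle r C D) =
         (sufmax (map f Xs) \<le> sufmax (map f Ys))"
proof
  assume "\<exists>C D. lexmax r Xs C \<and> lexmax r Ys D \<and> lexle r C D"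
  then obtain C D where h: "lexmax r Xs C" "lexmax r Ys D" "lexle r C D" by blast
  have C: "C \<in> set (subseqs Xs)" "map f C = sufmax (map f Xs)" using h(1) lexmax_pull[OF ag XS] by auto
  have D: "D \<in> set (subseqs Ys)" "map f D = sufmax (map f Ys)" using h(2) lexmax_pull[OF ag YS] by auto
  have "set C \<subseteq> S" "set D \<subseteq> S" using C D subseqs_set XS YS by blast+
  then show "sufmax (map f Xs) \<le> sufmax (map f Ys)" using lexle_pull[OF ag] h(3) C D by auto
next
  assume le: "sufmax (map f Xs) \<le> sufmax (map f Ys)"
  obtain C where C: "C \<in> set (subseqs Xs)" "map f C = sufmax (map f Xs)"
    using sufmax_in_subseqs[of "map f Xs"] unfolding subseqs_map by auto
  obtain D where D: "D \<in> set (subseqs Ys)" "map f D = sufmax (map f Ys)"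
    using sufmax_in_subseqs[of "map f Ys"] unfolding subseqs_map by auto
  have "set C \<subseteq> S" "set D \<subseteq> S" using C D subseqs_set XS YS by blast+
  then have "lexle r C D" using lexle_pull[OF ag] le C D by auto
  then show "\<exists>C D. lexmax r Xs C \<and> lexmax r Ys D \<and> lexle r C D"
    using C D lexmax_pull[OF ag XS] lexmax_pull[OF ag YS] by blast
qed

lemma wsplit_ne: "wsplit n xs \<noteq> []"
  by (induction xs) (auto simp: Let_def)

lemma wsplit_set: "P \<in> set (wsplit n A) \<Longrightarrow> set P \<subseteq> set A - {n}"
proof (induction A arbitrary: P)
  case Nil then show ?case by simp
next
  case (Cons x A)
  show ?case
  proof (cases "x = n")
    case True then show ?thesis using Cons by auto
  next
    case False
    have ne: "wsplit n A \<noteq> []" by (rule wsplit_ne)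
    from Cons.prems False have "P = x # hd (wsplit n A) \<or> P \<in> set (tl (wsplit n A))"
      by (auto simp: Let_def)
    then show ?thesis
    proof
      assume "P = x # hd (wsplit n A)"
      then show ?thesis using Cons.IH[of "hd (wsplit n A)"] ne False by auto
    next
      assume "P \<in> set (tl (wsplit n A))"
      then have "P \<in> set (wsplit n A)" using ne by (cases "wsplit n A") auto
      then show ?thesis using Cons.IH by auto
    qed
  qed
qed

lemma wsplit_nomem: "n \<notin> set A \<Longrightarrow> wsplit n A = [A]"
  by (induction A) auto

lemma wsplit_sep: "wsplit n (X @ n # Y) = wsplit n X @ wsplit n Y"
proof (induction X)
  case Nil then show ?case by simp
next
  case (Cons x X)
  have ne: "wsplit n X \<noteq> []" by (rule wsplit_ne)
  then show ?case using Cons by (cases "wsplit n X") (auto simp: Let_def)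
qed

lemma wsplit_app: "wsplit n (X @ Y) =
   butlast (wsplit n X) @ [last (wsplit n X) @ hd (wsplit n Y)] @ tl (wsplit n Y)"
proof (induction X)
  case Nil
  have "wsplit n Y \<noteq> []" by (rule wsplit_ne)
  then show ?case by (cases "wsplit n Y") auto
next
  case (Cons x X)
  have ne: "wsplit n X \<noteq> []" by (rule wsplit_ne)
  show ?case
  proof (cases "x = n")
    case True then show ?thesis using Cons ne by auto
  next
    case False
    then show ?thesis using Cons ne
      by (cases "wsplit n X"; cases "tl (wsplit n X)") (auto simp: Let_def)
  qed
qed

lemma wsplit_mid: "n \<notin> set B \<Longrightarrow> wsplit n (D @ B @ C) =
   butlast (wsplit n D) @ [last (wsplit n D) @ B @ hd (wsplit n C)] @ tl (wsplit n C)"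
  using wsplit_app[of n D "B @ C"] wsplit_app[of n B C] wsplit_nomem[of n B] by simp

lemma wsplit_C: "C \<noteq> [] \<Longrightarrow> hd (wsplit n C) \<noteq> [] \<or> tl (wsplit n C) \<noteq> []"
  using wsplit_ne by (cases C) (auto simp: Let_def)



function enc :: "nat \<Rightarrow> nat \<Rightarrow> nat list \<Rightarrow> tree" where
  "enc M n A = (if M < n then Node [] else Node (sufmax (map (enc M (Suc n)) (wsplit n A))))"
  by auto
termination by (relation "measure (\<lambda>(M,n,A). Suc M - n)") auto

declare enc.simps[simp del]

lemma enc_le: "n \<le> M \<Longrightarrow> enc M n A = Node (sufmax (map (enc M (Suc n)) (wsplit n A)))"
  by (subst enc.simps) simp

lemma enc_gt: "M < n \<Longrightarrow> enc M n A = Node []"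
  by (subst enc.simps) simp

lemma enc_level: "n \<le> m \<Longrightarrow> m \<le> M \<Longrightarrow> set A \<subseteq> {m..} \<Longrightarrow> set B \<subseteq> {m..} \<Longrightarrow>
   (enc M n A \<le> enc M n B) = (enc M m A \<le> enc M m B)"
proof (induction "m - n" arbitrary: n)
  case 0 then show ?case by simp
next
  case (Suc d)
  then have nm: "n < m" by simp
  have "n \<notin> set A" "n \<notin> set B" using Suc.prems nm by auto
  then have eA: "enc M n A = Node [enc M (Suc n) A]" and eB: "enc M n B = Node [enc M (Suc n) B]"
    using enc_le[of n M] wsplit_nomem Suc.prems nm by auto
  have ih: "(enc M (Suc n) A \<le> enc M (Suc n) B) = (enc M m A \<le> enc M m B)"
    using Suc.hyps(1)[of "Suc n"] Suc.hyps(2) Suc.prems nm by simp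
  show ?case unfolding eA eB Node_le ih[symmetric] by (auto simp: less_le)
qed

lemma bridge: "set (A@B) \<subseteq> {n..M} \<Longrightarrow> Suc M - n \<le> k \<Longrightarrow> wle_f k A B = (enc M n A \<le> enc M n B)"
proof (induction k arbitrary: n A B)
  case 0
  then have "A = []" "B = []" by auto
  then show ?case by simp
next
  case (Suc k)
  show ?case
  proof (cases "A @ B = []")
    case True then show ?thesis by simp
  next
    case False
    define m where "m = Min (set (A @ B))"
    have fin: "finite (set (A@B))" by simp
    have ne: "set (A@B) \<noteq> {}" using False by simp
    have mem: "m \<in> set (A @ B)" unfolding m_def by (rule Min_in[OF fin ne])
    have mle: "\<forall>x\<in>set (A@B). m \<le> x"
    proof
      fix x assume "x \<in> set (A@B)"
      then show "m \<le> x" unfolding m_def by (rule Min_le[OF fin])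
    qed
    have "m \<in> {n..M}" using mem Suc.prems(1) by (rule subsetD[rotated])
    then have nm: "n \<le> m" "m \<le> M" by simp_all
    define S where "S = {P::nat list. set P \<subseteq> {Suc m..M}}"
    have kk: "Suc M - Suc m \<le> k" using Suc.prems(2) nm by linarith
    have ag: "\<forall>P\<in>S. \<forall>Q\<in>S. wle_f k P Q = (enc M (Suc m) P \<le> enc M (Suc m) Q)"
    proof (intro ballI)
      fix P Q assume "P \<in> S" "Q \<in> S"
      then have "set (P @ Q) \<subseteq> {Suc m..M}" unfolding S_def by simp
      then show "wle_f k P Q = (enc M (Suc m) P \<le> enc M (Suc m) Q)"
        using Suc.IH[of P Q "Suc m"] kk by blast
    qed
    have rng: "\<forall>x\<in>set (A@B). m \<le> x \<and> x \<le> M" using mle Suc.prems(1) by auto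
    have XS: "set (wsplit m A) \<subseteq> S"
    proof
      fix P assume "P \<in> set (wsplit m A)"
      then have sp: "set P \<subseteq> set A - {m}" by (rule wsplit_set)
      have "set P \<subseteq> {Suc m..M}"
      proof
        fix x assume "x \<in> set P"
        then have "x \<in> set A" "x \<noteq> m" using sp by auto
        then have "m \<le> x \<and> x \<le> M" "x \<noteq> m" using rng by auto
        then show "x \<in> {Suc m..M}" by auto
      qed
      then show "P \<in> S" unfolding S_def by simp
    qed
    have YS: "set (wsplit m B) \<subseteq> S"
    proof
      fix P assume "P \<in> set (wsplit m B)"
      then have sp: "set P \<subseteq> set B - {m}" by (rule wsplit_set)
      have "set P \<subseteq> {Suc m..M}"
      proof
        fix x assume "x \<in> set P"
        then have "x \<in> set B" "x \<noteq> m" using sp by auto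
        then have "m \<le> x \<and> x \<le> M" "x \<noteq> m" using rng by auto
        then show "x \<in> {Suc m..M}" by auto
      qed
      then show "P \<in> S" unfolding S_def by simp
    qed
    have "wle_f (Suc k) A B = (\<exists>C D. lexmax (wle_f k) (wsplit m A) C \<and> lexmax (wle_f k) (wsplit m B) D
                  \<and> lexle (wle_f k) C D)"
      by (simp only: wle_f.simps(2) False if_False Let_def m_def)
    also have "\<dots> = (sufmax (map (enc M (Suc m)) (wsplit m A)) \<le> sufmax (map (enc M (Suc m)) (wsplit m B)))"
      by (rule ex_lexmax[OF ag XS YS])
    also have "\<dots> = (enc M m A \<le> enc M m B)"
      using enc_le[OF nm(2)] Node_le by simp
    also have "\<dots> = (enc M n A \<le> enc M n B)"
    proof -
      have "set A \<subseteq> {m..}" "set B \<subseteq> {m..}" using mle by auto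
      then show ?thesis using enc_level[OF nm, of A B] by simp
    qed
    finally show ?thesis .
  qed
qed

lemma wle_enc: "set (A@B) \<subseteq> {n..M} \<Longrightarrow> wle A B = (enc M n A \<le> enc M n B)"
proof (cases "A @ B = []")
  case True then show ?thesis by (simp add: wle_def)
next
  case False
  assume h: "set (A@B) \<subseteq> {n..M}"
  define mx where "mx = Max (set (A@B))"
  define mn where "mn = Min (set (A@B))"
  have fin: "finite (set (A@B))" by simp
  have s: "set (A@B) \<subseteq> {mn..mx}"
  proof
    fix x assume x: "x \<in> set (A@B)"
    have "mn \<le> x" unfolding mn_def by (rule Min_le[OF fin x])
    moreover have "x \<le> mx" unfolding mx_def by (rule Max_ge[OF fin x])
    ultimately show "x \<in> {mn..mx}" by simp
  qed
  define K where "K = Suc M + Suc mx"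
  have "wle A B = wle_f (Suc (mx - mn)) A B" unfolding wle_def mx_def mn_def by simp
  also have "\<dots> = (enc mx mn A \<le> enc mx mn B)" by (rule bridge[OF s]) simp
  also have "\<dots> = wle_f K A B" by (rule bridge[OF s, symmetric]) (simp add: K_def)
  also have "\<dots> = (enc M n A \<le> enc M n B)" by (rule bridge[OF h]) (simp add: K_def)
  finally show ?thesis .
qed

definition H :: "nat \<Rightarrow> nat \<Rightarrow> bool" where
  "H M n \<longleftrightarrow> (\<forall>A B C D. set (A@B@C@D) \<subseteq> {n..M} \<longrightarrow> list_all2 (\<le>) A B \<longrightarrow>
     enc M n A \<le> enc M n (D@B@C) \<and> ((C \<noteq> [] \<or> last A \<noteq> last B) \<longrightarrow> enc M n A < enc M n (D@B@C)))"

lemma H_base: "M < n \<Longrightarrow> H M n"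
  unfolding H_def by auto



lemma H_step:
  assumes nM: "n \<le> M" and HS: "H M (Suc n)"
  shows "H M n"
proof -
  define g where "g = enc M (Suc n)"
  define val where "val W = sufmax (map g (wsplit n W))" for W
  have Hg: "\<And>A B C D. set (A@B@C@D) \<subseteq> {Suc n..M} \<Longrightarrow> list_all2 (\<le>) A B \<Longrightarrow>
     g A \<le> g (D@B@C) \<and> ((C \<noteq> [] \<or> last A \<noteq> last B) \<longrightarrow> g A < g (D@B@C))"
    using HS unfolding H_def g_def by blast
  have Hempty: "\<And>W. set W \<subseteq> {Suc n..M} \<Longrightarrow> W \<noteq> [] \<Longrightarrow> g [] < g W"
    using Hg[of "[]" "[]" _ "[]"] by auto
  have base: "\<forall>A B E F. length A = m \<longrightarrow> set (A@B@E@F) \<subseteq> {n..M} \<longrightarrow> n \<notin> set B \<longrightarrow> n \<notin> set E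
     \<longrightarrow> n \<notin> set F \<longrightarrow> list_all2 (\<le>) A B \<longrightarrow>
     val A \<le> [g (E@B@F)] \<and> ((F \<noteq> [] \<or> last A \<noteq> last B) \<longrightarrow> val A < [g (E@B@F)])" for m
  proof (induction m rule: less_induct)
    case (less m)
    show ?case
    proof (intro allI impI)
      fix A B E F
      assume lA: "length A = m" and sA: "set (A@B@E@F) \<subseteq> {n..M}" and nB: "n \<notin> set B"
        and nE: "n \<notin> set E" and nF: "n \<notin> set F" and AB: "list_all2 (\<le>) A B"
      show "val A \<le> [g (E@B@F)] \<and> ((F \<noteq> [] \<or> last A \<noteq> last B) \<longrightarrow> val A < [g (E@B@F)])"
      proof (cases "n \<in> set A")
        case False
        have vA: "val A = [g A]" unfolding val_def using wsplit_nomem[OF False] by simp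
        have s1: "set (A@B@F@E) \<subseteq> {Suc n..M}" using sA nB nE nF False
          by (auto simp: Suc_le_eq order.strict_iff_order)
        show ?thesis using Hg[OF s1 AB] unfolding vA by (auto simp: less_le)
      next
        case True
        obtain A' Ak where A: "A = A' @ n # Ak" and nAk: "n \<notin> set Ak"
          using split_list_last[OF True] by blast
        obtain B' b Bk where B: "B = B' @ b # Bk" and AB': "list_all2 (\<le>) A' B'"
          and nb: "n \<le> b" and ABk: "list_all2 (\<le>) Ak Bk"
          using AB unfolding A by (auto simp: list_all2_append1 list_all2_Cons1)
        have bn: "b \<noteq> n" using nB B by auto
        let ?y = "g (E@B@F)"
        have ih: "val A' < [g (E @ B' @ (b # Bk @ F))]"
        proof -
          have "length A' < m" using lA A by simp
          moreover have "set (A'@B'@E@(b # Bk @ F)) \<subseteq> {n..M}" using sA A B by auto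
          moreover have "n \<notin> set B'" "n \<notin> set (b # Bk @ F)" using nB nF B by auto
          ultimately show ?thesis using less.IH[of "length A'"] nE AB' by blast
        qed
        have yeq: "E @ B' @ (b # Bk @ F) = E @ B @ F" "(E @ B' @ [b]) @ Bk @ F = E @ B @ F"
          using B by auto
        have s2: "set (Ak@Bk@F@(E @ B' @ [b])) \<subseteq> {Suc n..M}" using sA A B nB nE nF nAk
          by (auto simp: Suc_le_eq order.strict_iff_order)
        have hk: "g Ak \<le> ?y \<and> ((F \<noteq> [] \<or> last Ak \<noteq> last Bk) \<longrightarrow> g Ak < ?y)"
          using Hg[OF s2 ABk] yeq by simp
        have lk: "length Ak = length Bk" using ABk list_all2_lengthD by blast
        have strict: "(F \<noteq> [] \<or> last A \<noteq> last B) \<Longrightarrow> g Ak < ?y"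
        proof -
          assume c: "F \<noteq> [] \<or> last A \<noteq> last B"
          show "g Ak < ?y"
          proof (cases "Ak = []")
            case False
            then have "Bk \<noteq> []" using lk by auto
            then show ?thesis using hk c A B False by auto
          next
            case True
            then have "Bk = []" using lk by auto
            show ?thesis
            proof (cases "F = []")
              case False then show ?thesis using hk by auto
            next
              case Fn: True
              have "set (E @ B @ F) \<subseteq> {Suc n..M}" using sA nB nE nF
                by (auto simp: Suc_le_eq order.strict_iff_order)
              then show ?thesis using Hempty[of "E@B@F"] True B by auto
            qed
          qed
        qed
        have vA: "val A = sufmax (map g (wsplit n A') @ [g Ak])"
          unfolding val_def A wsplit_sep wsplit_nomem[OF nAk] by simp
        have ih': "sufmax (map g (wsplit n A')) < [?y]" using ih yeq unfolding val_def by simp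
        show ?thesis unfolding vA
          using sufmax_snoc_le[OF ih', of "g Ak"] hk strict by auto
      qed
    qed
  qed
  have step: "\<forall>A B C D. length B = m \<longrightarrow> set (A@B@C@D) \<subseteq> {n..M} \<longrightarrow> list_all2 (\<le>) A B \<longrightarrow>
     val A \<le> val (D@B@C) \<and> ((C \<noteq> [] \<or> last A \<noteq> last B) \<longrightarrow> val A < val (D@B@C))" for m
  proof (induction m rule: less_induct)
    case (less m)
    show ?case
    proof (intro allI impI)
      fix A B C D
      assume lB: "length B = m" and sA: "set (A@B@C@D) \<subseteq> {n..M}" and AB: "list_all2 (\<le>) A B"
      show "val A \<le> val (D@B@C) \<and> ((C \<noteq> [] \<or> last A \<noteq> last B) \<longrightarrow> val A < val (D@B@C))"
      proof (cases "n \<in> set B")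
        case False
        define E where "E = last (wsplit n D)"
        define F where "F = hd (wsplit n C)"
        have "E \<in> set (wsplit n D)" unfolding E_def using wsplit_ne last_in_set by blast
        then have sE: "set E \<subseteq> set D - {n}" using wsplit_set by blast
        have "F \<in> set (wsplit n C)" unfolding F_def using wsplit_ne hd_in_set by blast
        then have sF: "set F \<subseteq> set C - {n}" using wsplit_set by blast
        have pre: "set (A@B@E@F) \<subseteq> {n..M}" using sA sE sF by auto
        have nE: "n \<notin> set E" and nF: "n \<notin> set F" using sE sF by auto
        have b: "val A \<le> [g (E@B@F)] \<and> ((F \<noteq> [] \<or> last A \<noteq> last B) \<longrightarrow> val A < [g (E@B@F)])"
          using base[of "length A", rule_format, OF refl pre False nE nF AB] .
        have vX: "val (D@B@C) = sufmax (map g (butlast (wsplit n D)) @ g (E@B@F) # map g (tl (wsplit n C)))"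
          unfolding val_def wsplit_mid[OF False] E_def F_def by simp
        note c = sufmax_ge_single[where y="g (E@B@F)" and ds="map g (butlast (wsplit n D))" and cs="map g (tl (wsplit n C))"]
        have C: "C \<noteq> [] \<Longrightarrow> F \<noteq> [] \<or> tl (wsplit n C) \<noteq> []" unfolding F_def by (rule wsplit_C)
        let ?X = "sufmax (map g (butlast (wsplit n D)) @ g (E@B@F) # map g (tl (wsplit n C)))"
        have c1: "[g (E@B@F)] \<le> ?X" using c(1) .
        have le: "val A \<le> ?X" using b c1 by (rule order.trans[OF conjunct1])
        have lt: "val A < ?X" if cond: "C \<noteq> [] \<or> last A \<noteq> last B"
        proof (cases "F \<noteq> [] \<or> last A \<noteq> last B")
          case True
          then have "val A < [g (E@B@F)]" using b by blast
          then show ?thesis using c1 by (rule order.strict_trans2)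
        next
          case False
          then have "C \<noteq> []" using cond by blast
          then have "tl (wsplit n C) \<noteq> []" using C False by blast
          then have "map g (tl (wsplit n C)) \<noteq> []" by simp
          then have "[g (E@B@F)] < ?X" by (rule c(2))
          then show ?thesis using b by (meson order.strict_trans1)
        qed
        show ?thesis unfolding vX using le lt by blast
      next
        case True
        obtain B' Bl where B: "B = B' @ n # Bl" and nBl: "n \<notin> set Bl"
          using split_list_last[OF True] by blast
        obtain A' a Al where A: "A = A' @ a # Al" and AB': "list_all2 (\<le>) A' B'"
          and an: "a \<le> n" and ABl: "list_all2 (\<le>) Al Bl"
          using AB unfolding B by (auto simp: list_all2_append2 list_all2_Cons2)
        have "a \<in> set A" using A by simp
        then have "a \<ge> n" using sA by auto
        with an have a: "a = n" by simp
        have l1: "length B' < m" "length Bl < m" using lB B by simp_all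
        have p1: "set (A'@B'@[]@D) \<subseteq> {n..M}" using sA A B by auto
        have p2: "set (Al@Bl@C@[]) \<subseteq> {n..M}" using sA A B by auto
        have ih1: "val A' \<le> val (D @ B' @ [])"
          using less.IH[OF l1(1), rule_format, OF refl p1 AB'] by (rule conjunct1)
        have ih2: "val Al \<le> val ([] @ Bl @ C) \<and> ((C \<noteq> [] \<or> last Al \<noteq> last Bl) \<longrightarrow> val Al < val ([] @ Bl @ C))"
          using less.IH[OF l1(2), rule_format, OF refl p2 ABl] .
        have vA: "val A = sufmax (map g (wsplit n A') @ map g (wsplit n Al))"
          unfolding val_def A a wsplit_sep by simp
        have eqX: "D @ B @ C = (D @ B') @ n # (Bl @ C)" using B by simp
        have vX: "val (D@B@C) = sufmax (map g (wsplit n (D @ B')) @ map g (wsplit n (Bl @ C)))"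
          unfolding val_def eqX wsplit_sep by simp
        have m1: "val A \<le> sufmax (map g (wsplit n (D @ B')) @ map g (wsplit n Al))"
          unfolding vA by (rule sufmax_mono_left) (use ih1 in \<open>simp add: val_def\<close>)
        have m2: "sufmax (map g (wsplit n (D @ B')) @ map g (wsplit n Al)) \<le> val (D@B@C)"
          and m3: "(C \<noteq> [] \<or> last Al \<noteq> last Bl) \<Longrightarrow>
             sufmax (map g (wsplit n (D @ B')) @ map g (wsplit n Al)) < val (D@B@C)"
          unfolding vX using sufmax_mono_right[of "map g (wsplit n Al)" "map g (wsplit n (Bl @ C))"] ih2
          by (auto simp: val_def)
        have ll: "length Al = length Bl" using ABl list_all2_lengthD by blast
        have cond: "(C \<noteq> [] \<or> last A \<noteq> last B) \<Longrightarrow> (C \<noteq> [] \<or> last Al \<noteq> last Bl)"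
        proof -
          assume c: "C \<noteq> [] \<or> last A \<noteq> last B"
          show ?thesis
          proof (cases "Al = []")
            case True then have "Bl = []" using ll by auto
            then show ?thesis using c True A B a by auto
          next
            case False then have "Bl \<noteq> []" using ll by auto
            then show ?thesis using c False A B by auto
          qed
        qed
        show ?thesis using m1 m2 m3 cond by (meson order.trans order.strict_trans1)
      qed
    qed
  qed
  show ?thesis unfolding H_def
  proof (intro allI impI)
    fix A B C D
    assume s: "set (A@B@C@D) \<subseteq> {n..M}" and AB: "list_all2 (\<le>) A B"
    have eA: "enc M n A = Node (val A)" and eX: "enc M n (D@B@C) = Node (val (D@B@C))"
      using enc_le[OF nM] unfolding val_def g_def by auto
    show "enc M n A \<le> enc M n (D@B@C) \<and> ((C \<noteq> [] \<or> last A \<noteq> last B) \<longrightarrow> enc M n A < enc M n (D@B@C))"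
      unfolding eA eX Node_le Node_less using step[of "length B"] s AB by blast
  qed
qed

lemma H_all: "H M n"
proof (induction "Suc M - n" arbitrary: n)
  case 0 then show ?case using H_base by simp
next
  case (Suc d)
  show ?case
  proof (cases "M < n")
    case True then show ?thesis using H_base by simp
  next
    case False
    then show ?thesis using H_step[of n M] Suc by simp
  qed
qed

theorem lemma4:
  fixes A B C D :: "nat list"
  assumes "length A = length B"
    and "\<forall>i < length A. A ! i \<le> B ! i"
  shows "wle A (D @ B @ C) \<and>
         ((C \<noteq> [] \<or> last A \<noteq> last B) \<longrightarrow> wless A (D @ B @ C))"
proof -
  define M where "M = Max (insert 0 (set (A@B@C@D)))"
  have s: "set (A@B@C@D) \<subseteq> {0..M}" unfolding M_def by auto
  have AB: "list_all2 (\<le>) A B" using assms by (simp add: list_all2_conv_all_nth)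
  have s2: "set (A @ (D@B@C)) \<subseteq> {0..M}" using s by auto
  have s3: "set ((D@B@C) @ A) \<subseteq> {0..M}" using s by auto
  have h: "enc M 0 A \<le> enc M 0 (D@B@C) \<and> ((C \<noteq> [] \<or> last A \<noteq> last B) \<longrightarrow> enc M 0 A < enc M 0 (D@B@C))"
    using H_all[of M 0] s AB unfolding H_def by blast
  show ?thesis unfolding wless_def wle_enc[OF s2] wle_enc[OF s3] using h by (auto simp: less_le_not_le)
qed

end
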